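(* Let $\bm X=X_1\times\cdots\times X_n\in\mathbb{IR}^n$ with $\operatorname{wid}(X_i)>0$ for at least one $i$. Let $Z\subseteq\mathbb{R}$ be convex with $\sum_{i=1}^n x_i\in Z$ for all $\bm x\in\bm X$, and let $\varphi:Z\to\mathbb{R}$ be convex. Define $\mathcal P=\{j\in\{1,\dots,n\}:\operatorname{wid}(X_j)>0\}$, $\theta_i=\operatorname{wid}(X_i)/\sum_{j\in\mathcal P}\operatorname{wid}(X_j)$ for $i\in\mathcal P$, $\underline\sigma=\sum_{i=1}^n\underline X_i$ and $\overline\sigma=\sum_{i=1}^n\overline X_i$. Then for all $\bm x\in\bm X$, $$\varphi\Big(\sum_{i=1}^n x_i\Big)\le\sum_{i\in\mathcal P}\theta_i\,\varphi\Big(\frac{x_i-\underline X_i}{\theta_i}+\underline\sigma\Big)=\sum_{i\in\mathcal P}\theta_i\,\varphi\Big(\frac{x_i-\overline X_i}{\theta_i}+\overline\sigma\Big).$$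
   Context: $\mathbb{IR}^n$ is the set of boxes $\bm X=X_1\times\cdots\times X_n$ with $X_i=[\underline X_i,\overline X_i]$ compact real intervals; $\operatorname{wid}(X_i)=\overline X_i-\underline X_i$. *)

theory Defs
  imports "HOL-Analysis.Analysis"
begin

text \<open>An interval box X = X_1 x ... x X_n is given by lower and upper endpoint
functions lo, hi :: nat => real on the index set {1..n}, with lo i <= hi i.\<close>

definition wid :: "(nat \<Rightarrow> real) \<Rightarrow> (nat \<Rightarrow> real) \<Rightarrow> nat \<Rightarrow> real" where
  "wid lo hi i = hi i - lo i"

definition in_box :: "nat \<Rightarrow> (nat \<Rightarrow> real) \<Rightarrow> (nat \<Rightarrow> real) \<Rightarrow> (nat \<Rightarrow> real) \<Rightarrow> bool" where
  "in_box n lo hi x \<longleftrightarrow> (\<forall>i\<in>{1..n}. lo i \<le> x i \<and> x i \<le> hi i)"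

end

theory Submission
  imports Defs
begin

theorem proposition2:
  fixes n :: nat and lo hi :: "nat \<Rightarrow> real" and Z :: "real set" and \<phi> :: "real \<Rightarrow> real"
  assumes box: "\<forall>i\<in>{1..n}. lo i \<le> hi i"
    and pos: "\<exists>i\<in>{1..n}. wid lo hi i > 0"
    and Zconv: "convex Z"
    and sumZ: "\<forall>x. in_box n lo hi x \<longrightarrow> (\<Sum>i=1..n. x i) \<in> Z"
    and phi: "convex_on Z \<phi>"
  defines "P \<equiv> {j\<in>{1..n}. wid lo hi j > 0}"
    and "\<theta> \<equiv> (\<lambda>i. wid lo hi i / (\<Sum>j\<in>{j\<in>{1..n}. wid lo hi j > 0}. wid lo hi j))"
    and "\<sigma>lo \<equiv> (\<Sum>i=1..n. lo i)"
    and "\<sigma>hi \<equiv> (\<Sum>i=1..n. hi i)"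
  shows "\<forall>x. in_box n lo hi x \<longrightarrow>
           \<phi> (\<Sum>i=1..n. x i) \<le> (\<Sum>i\<in>P. \<theta> i * \<phi> ((x i - lo i) / \<theta> i + \<sigma>lo))
         \<and> (\<Sum>i\<in>P. \<theta> i * \<phi> ((x i - lo i) / \<theta> i + \<sigma>lo))
           = (\<Sum>i\<in>P. \<theta> i * \<phi> ((x i - hi i) / \<theta> i + \<sigma>hi))"
proof (intro allI impI)
  fix x assume xb: "in_box n lo hi x"
  define W where "W = (\<Sum>j\<in>P. wid lo hi j)"
  have th: "\<theta> = (\<lambda>i. wid lo hi i / W)" unfolding \<theta>_def W_def P_def by simp
  have finP: "finite P" unfolding P_def by simp
  have Pne: "P \<noteq> {}" using pos unfolding P_def by auto
  have Wpos: "W > 0" unfolding W_def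
    using finP Pne by (intro sum_pos) (auto simp: P_def)
  have wz: "\<And>i. i \<in> {1..n} \<Longrightarrow> i \<notin> P \<Longrightarrow> wid lo hi i = 0"
    using box unfolding P_def wid_def by force
  have gen: "(\<Sum>i=1..n. f i) = (\<Sum>i\<in>P. f i)" if "\<And>i. i \<in> {1..n} \<Longrightarrow> i \<notin> P \<Longrightarrow> f i = 0"
    for f :: "nat \<Rightarrow> real"
  proof (rule sum.mono_neutral_right)
    show "finite {1..n}" by simp
    show "P \<subseteq> {1..n}" unfolding P_def by blast
    show "\<forall>i\<in>{1..n} - P. f i = 0" using that by blast
  qed
  have Wd: "\<sigma>hi - \<sigma>lo = W"
  proof -
    have "\<sigma>hi - \<sigma>lo = (\<Sum>i=1..n. wid lo hi i)"
      unfolding \<sigma>hi_def \<sigma>lo_def wid_def by (simp add: sum_subtractf)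
    also have "\<dots> = W" unfolding W_def by (rule gen) (use wz in auto)
    finally show ?thesis .
  qed
  have xeq: "(\<Sum>i=1..n. x i) = \<sigma>lo + (\<Sum>i\<in>P. x i - lo i)"
  proof -
    have "(\<Sum>i=1..n. x i) - \<sigma>lo = (\<Sum>i=1..n. x i - lo i)"
      unfolding \<sigma>lo_def by (simp add: sum_subtractf)
    also have "\<dots> = (\<Sum>i\<in>P. x i - lo i)"
    proof (rule gen)
      fix i assume "i \<in> {1..n}" "i \<notin> P"
      with wz[of i] xb show "x i - lo i = 0" unfolding in_box_def wid_def by force
    qed
    finally show ?thesis by simp
  qed
  have thpos: "\<And>i. i \<in> P \<Longrightarrow> \<theta> i > 0" unfolding th using Wpos by (auto simp: P_def)
  have thsum: "(\<Sum>i\<in>P. \<theta> i) = 1" unfolding th using Wpos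
    by (simp add: sum_divide_distrib[symmetric] W_def)
  have loZ: "\<sigma>lo \<in> Z" using sumZ box unfolding \<sigma>lo_def in_box_def by auto
  have hiZ: "\<sigma>hi \<in> Z" using sumZ box unfolding \<sigma>hi_def in_box_def by auto
  have yZ: "(x i - lo i) / \<theta> i + \<sigma>lo \<in> Z" if iP: "i \<in> P" for i
  proof -
    define t where "t = (x i - lo i) / wid lo hi i"
    have wp: "wid lo hi i > 0" using iP unfolding P_def by auto
    have xi: "lo i \<le> x i" "x i \<le> hi i" using xb iP unfolding in_box_def P_def by auto
    have t0: "0 \<le> t" "t \<le> 1" unfolding t_def using wp xi by (auto simp: wid_def field_simps)
    have "(x i - lo i) / \<theta> i + \<sigma>lo = (1 - t) *\<^sub>R \<sigma>lo + t *\<^sub>R \<sigma>hi"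
      using wp Wpos Wd unfolding th t_def by (simp add: field_simps)
    also have "\<dots> \<in> Z" using convexD[OF Zconv loZ hiZ] t0 by simp
    finally show ?thesis .
  qed
  have "\<phi> (\<Sum>i\<in>P. \<theta> i *\<^sub>R ((x i - lo i) / \<theta> i + \<sigma>lo)) \<le> (\<Sum>i\<in>P. \<theta> i * \<phi> ((x i - lo i) / \<theta> i + \<sigma>lo))"
    by (rule convex_on_sum[OF finP Pne phi thsum]) (use thpos yZ less_imp_le in blast)+
  moreover have "(\<Sum>i\<in>P. \<theta> i *\<^sub>R ((x i - lo i) / \<theta> i + \<sigma>lo)) = (\<Sum>i=1..n. x i)"
  proof -
    have "(\<Sum>i\<in>P. \<theta> i *\<^sub>R ((x i - lo i) / \<theta> i + \<sigma>lo)) = (\<Sum>i\<in>P. (x i - lo i) + \<theta> i * \<sigma>lo)"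
      using thpos by (intro sum.cong) (auto simp: field_simps dest: thpos)
    also have "\<dots> = (\<Sum>i\<in>P. x i - lo i) + \<sigma>lo"
      using thsum by (simp add: sum.distrib sum_distrib_right[symmetric])
    finally show ?thesis using xeq by simp
  qed
  moreover have "(\<Sum>i\<in>P. \<theta> i * \<phi> ((x i - lo i) / \<theta> i + \<sigma>lo))
           = (\<Sum>i\<in>P. \<theta> i * \<phi> ((x i - hi i) / \<theta> i + \<sigma>hi))"
  proof (rule sum.cong[OF refl])
    fix i assume iP: "i \<in> P"
    have wp: "wid lo hi i > 0" using iP unfolding P_def by auto
    have "(x i - lo i) / \<theta> i + \<sigma>lo = (x i - hi i) / \<theta> i + \<sigma>hi"
      using wp Wpos Wd unfolding th by (simp add: field_simps wid_def)
    then show "\<theta> i * \<phi> ((x i - lo i) / \<theta> i + \<sigma>lo) = \<theta> i * \<phi> ((x i - hi i) / \<theta> i + \<sigma>hi)" by simp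
  qed
  ultimately show "\<phi> (\<Sum>i=1..n. x i) \<le> (\<Sum>i\<in>P. \<theta> i * \<phi> ((x i - lo i) / \<theta> i + \<sigma>lo))
         \<and> (\<Sum>i\<in>P. \<theta> i * \<phi> ((x i - lo i) / \<theta> i + \<sigma>lo))
           = (\<Sum>i\<in>P. \<theta> i * \<phi> ((x i - hi i) / \<theta> i + \<sigma>hi))" by simp
qed

end
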